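(* Let $G=\{(x,R(x)) : x\in[0,1]\}$ be the graph of $R$. Then $$1\le\dim_H G\le\dim_B G=\dim_B\overline G=\log_2 3,$$ where $\dim_H$ and $\dim_B$ denote Hausdorff and box-counting dimension.
   Context: Define $\rho$ on binary words: for $b=b_1b_2\dots$, $\rho(b)$ is obtained by deleting every digit $b_n=0$ and replacing every $b_n=1$ by $0$ if $n$ is odd and by $1$ if $n$ is even. For $x\in(0,1]$ let $\beta(x)$ be the unique binary expansion of $x$ with infinitely many $1$'s. Define $R:[0,1]\to[0,1]$ by $R(0)=2/3$ and, for $x\in(0,1]$, $R(x)=\sum_{n\ge1}c_n2^{-n}$ where $c=\rho(\beta(x))$. *)

theory Defs
  imports "HOL-Analysis.Analysis" "HOL-Library.Infinite_Set"
begin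

text \<open>Binary digit sequences are indexed from 0: position k of the sequence is the
  digit b_(k+1) of the paper, so the paper's index n is k+1 (n odd iff k even).\<close>

definition binexp :: "real \<Rightarrow> nat \<Rightarrow> nat" where
  "binexp x = (THE b. (\<forall>k. b k \<in> {0, 1}) \<and> infinite {k. b k = 1} \<and>
                       x = (\<Sum>k. real (b k) / 2 ^ (k + 1)))"

text \<open>rho: delete the zeros; the m-th surviving 1 (at paper position n = p+1) becomes
  0 if n is odd and 1 if n is even.  Applied to words with infinitely many 1s.\<close>

definition rho :: "(nat \<Rightarrow> nat) \<Rightarrow> nat \<Rightarrow> nat" where
  "rho b m = (let p = enumerate {k. b k = 1} m in if even p then 0 else 1)"

definition R :: "real \<Rightarrow> real" where
  "R x = (if x = 0 then 2 / 3 else (\<Sum>m. real (rho (binexp x) m) / 2 ^ (m + 1)))"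

definition graphR :: "(real \<times> real) set" where
  "graphR = {(x, R x) | x. x \<in> {0..1}}"

definition hcost :: "real \<Rightarrow> 'a::metric_space set \<Rightarrow> real" where
  "hcost s U = (if U = {} then 0 else if s = 0 then 1 else diameter U powr s)"

definition hausdorff_pre :: "real \<Rightarrow> real \<Rightarrow> 'a::metric_space set \<Rightarrow> ennreal" where
  "hausdorff_pre s \<delta> E =
     (INF U \<in> {U :: nat \<Rightarrow> 'a set. E \<subseteq> (\<Union>i. U i) \<and>
                 (\<forall>i. bounded (U i) \<and> diameter (U i) \<le> \<delta>)}.
        (\<Sum>i. ennreal (hcost s (U i))))"

definition hausdorff_measure :: "real \<Rightarrow> 'a::metric_space set \<Rightarrow> ennreal" where
  "hausdorff_measure s E = (SUP \<delta> \<in> {0<..}. hausdorff_pre s \<delta> E)"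

definition hausdorff_dim :: "'a::metric_space set \<Rightarrow> real" where
  "hausdorff_dim E = Inf {s. s \<ge> 0 \<and> hausdorff_measure s E = 0}"

definition box_count :: "real \<Rightarrow> 'a::metric_space set \<Rightarrow> nat" where
  "box_count \<delta> E = Inf {card F | F. finite F \<and> E \<subseteq> \<Union>F \<and>
                        (\<forall>U\<in>F. bounded U \<and> diameter U \<le> \<delta>)}"

definition has_box_dim :: "'a::metric_space set \<Rightarrow> real \<Rightarrow> bool" where
  "has_box_dim E d \<longleftrightarrow>
     ((\<lambda>\<delta>. ln (real (box_count \<delta> E)) / - ln \<delta>) \<longlongrightarrow> d) (at_right 0)"

end

theory Submission
  imports Defs
begin


definition val :: "(nat \<Rightarrow> nat) \<Rightarrow> real" where
  "val b = (\<Sum>k. real (b k) / 2 ^ (k + 1))"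

definition bin :: "(nat \<Rightarrow> nat) \<Rightarrow> bool" where
  "bin b \<longleftrightarrow> (\<forall>k. b k \<in> {0, 1})"

definition sh :: "nat \<Rightarrow> (nat \<Rightarrow> nat) \<Rightarrow> nat \<Rightarrow> nat" where
  "sh n b = (\<lambda>k. b (k + n))"

lemma bin_le1: "bin b \<Longrightarrow> b k \<le> 1"
  unfolding bin_def by (metis empty_iff insert_iff le_numeral_extra(4) zero_le)

lemma bin_le1r: "bin b \<Longrightarrow> real (b k) \<le> 1"
  using bin_le1[of b k] by linarith

lemma summable_val: assumes "bin b" shows "summable (\<lambda>k. real (b k) / 2 ^ (k + 1))"
proof (rule summable_comparison_test[where g="\<lambda>k. (1/2)^k"])
  show "\<exists>N. \<forall>n\<ge>N. norm (real (b n) / 2 ^ (n + 1)) \<le> (1/2)^n"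
  proof (intro exI allI impI)
    fix n :: nat
    have "real (b n) \<le> 1" using bin_le1[OF assms] by simp
    then have "real (b n) / 2 ^ (n + 1) \<le> 1 / 2^(n+1)" by (simp add: divide_right_mono)
    also have "\<dots> \<le> (1/2)^n" by (simp add: power_divide field_simps)
    finally show "norm (real (b n) / 2 ^ (n + 1)) \<le> (1/2)^n" by simp
  qed
qed simp

lemma sum_half_pow: "(\<Sum>k. (1::real) / 2 ^ (k + 1)) = 1"
proof -
  have "(\<lambda>k. (1::real) / 2 ^ (k + 1)) = (\<lambda>k. (1/2) * (1/2)^k)" by (simp add: power_divide)
  moreover have "(\<Sum>k. (1/2::real) * (1/2)^k) = 1"
    using suminf_mult[OF summable_geometric[of "1/2::real"], of "1/2"] suminf_geometric[of "1/2::real"]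
    by simp
  ultimately show ?thesis by simp
qed

lemma summable_half_pow: "summable (\<lambda>k. (1::real) / 2 ^ (k + 1))"
proof -
  have "(\<lambda>k. (1::real) / 2 ^ (k + 1)) = (\<lambda>k. (1/2) * (1/2)^k)" by (simp add: power_divide)
  then show ?thesis using summable_mult[OF summable_geometric[of "1/2::real"]] by simp
qed

lemma val_nonneg: "bin b \<Longrightarrow> 0 \<le> val b"
  unfolding val_def by (intro suminf_nonneg summable_val) auto

lemma val_le1: assumes "bin b" shows "val b \<le> 1"
proof -
  have "val b \<le> (\<Sum>k. (1::real) / 2 ^ (k + 1))"
    unfolding val_def
    by (intro suminf_le summable_val assms summable_half_pow divide_right_mono bin_le1r[OF assms]) simp
  then show ?thesis using sum_half_pow by simp
qed

lemma val_pos: assumes "bin b" "infinite {k. b k = 1}" shows "0 < val b"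
proof -
  obtain i where "b i = 1" using assms(2) not_finite_existsD by auto
  then show ?thesis unfolding val_def
    by (intro suminf_pos2[where i=i] summable_val assms) auto
qed

lemma bin_sh: "bin b \<Longrightarrow> bin (sh n b)" unfolding bin_def sh_def by auto

lemma inf_sh: assumes "infinite {k. b k = 1}" shows "infinite {k. sh n b k = 1}"
proof
  assume f: "finite {k. sh n b k = 1}"
  have sub: "{k. b k = 1} \<subseteq> {..<n} \<union> (\<lambda>k. k + n) ` {k. sh n b k = 1}"
  proof
    fix x assume x: "x \<in> {k. b k = 1}"
    show "x \<in> {..<n} \<union> (\<lambda>k. k + n) ` {k. sh n b k = 1}"
    proof (cases "x < n")
      case True then show ?thesis by simp
    next
      case False
      then have e: "x = (x - n) + n" by simp
      have "sh n b (x - n) = 1" using x e unfolding sh_def by simp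
      then have "x \<in> (\<lambda>k. k + n) ` {k. sh n b k = 1}" using e by blast
      then show ?thesis by simp
    qed
  qed
  have "finite ({..<n} \<union> (\<lambda>k. k + n) ` {k. sh n b k = 1})" using f by simp
  then have "finite {k. b k = 1}" using sub finite_subset by blast
  then show False using assms by simp
qed

lemma val_split: assumes "bin b"
  shows "val b = (\<Sum>k<n. real (b k) / 2 ^ (k + 1)) + val (sh n b) / 2 ^ n"
proof -
  have "val b = (\<Sum>k. real (b (k + n)) / 2 ^ (k + n + 1)) + (\<Sum>k<n. real (b k) / 2 ^ (k + 1))"
    unfolding val_def using suminf_split_initial_segment[OF summable_val[OF assms], of n] by simp
  also have "(\<lambda>k. real (b (k + n)) / 2 ^ (k + n + 1)) = (\<lambda>k. (real (sh n b k) / 2 ^ (k + 1)) / 2^n)"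
    by (auto simp: sh_def power_add)
  also have "(\<Sum>k. (real (sh n b k) / 2 ^ (k + 1)) / 2^n) = val (sh n b) / 2^n"
    unfolding val_def by (rule suminf_divide[OF summable_val[OF bin_sh[OF assms]]])
  finally show ?thesis by simp
qed



lemma val_lt: assumes "bin b" "bin b'" "infinite {k. b' k = 1}"
  and agree: "\<forall>k<n. b k = b' k" and "b n = 0" "b' n = 1"
shows "val b < val b'"
proof -
  have P: "(\<Sum>k<Suc n. real (b k) / 2 ^ (k + 1)) + 1 / 2^(Suc n) = (\<Sum>k<Suc n. real (b' k) / 2 ^ (k + 1))"
    using agree assms(5,6) by simp
  have "val b = (\<Sum>k<Suc n. real (b k) / 2 ^ (k + 1)) + val (sh (Suc n) b) / 2 ^ (Suc n)"
    using val_split[OF assms(1)] .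
  also have "\<dots> \<le> (\<Sum>k<Suc n. real (b k) / 2 ^ (k + 1)) + 1 / 2 ^ (Suc n)"
    using val_le1[OF bin_sh[OF assms(1)], of "Suc n"] by (simp add: divide_right_mono)
  also have "\<dots> < (\<Sum>k<Suc n. real (b k) / 2 ^ (k + 1)) + 1 / 2 ^ (Suc n) + val (sh (Suc n) b') / 2 ^ (Suc n)"
    using val_pos[OF bin_sh[OF assms(2)] inf_sh[OF assms(3)]] by simp
  also have "\<dots> = val b'" using val_split[OF assms(2), of "Suc n"] P by simp
  finally show ?thesis .
qed

lemma val_inj: assumes "bin b" "bin b'" "infinite {k. b k = 1}" "infinite {k. b' k = 1}"
  and "val b = val b'" shows "b = b'"
proof (rule ccontr)
  assume "b \<noteq> b'"
  then have ex: "\<exists>k. b k \<noteq> b' k" by auto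
  define n where "n = (LEAST k. b k \<noteq> b' k)"
  have ne: "b n \<noteq> b' n" unfolding n_def by (rule LeastI_ex[OF ex])
  have ag: "\<forall>k<n. b k = b' k" unfolding n_def using not_less_Least by blast
  have "b n \<in> {0,1}" "b' n \<in> {0,1}" using assms(1,2) unfolding bin_def by auto
  then have "(b n = 0 \<and> b' n = 1) \<or> (b' n = 0 \<and> b n = 1)" using ne by auto
  then show False
  proof
    assume "b n = 0 \<and> b' n = 1"
    then have "val b < val b'" using val_lt[OF assms(1,2,4) ag] by auto
    then show False using assms(5) by simp
  next
    assume "b' n = 0 \<and> b n = 1"
    moreover have ag': "\<forall>k<n. b' k = b k" using ag by simp
    ultimately have "val b' < val b" using val_lt[OF assms(2,1,3) ag'] by auto
    then show False using assms(5) by simp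
  qed
qed

lemma val_exists: assumes "0 < x" "x \<le> (1::real)"
  shows "\<exists>b. bin b \<and> infinite {k. b k = 1} \<and> val b = x"
proof -
  define q :: "nat \<Rightarrow> int" where "q k = \<lceil>2^k * x\<rceil> - 1" for k
  have qb: "q k < 2^k * x" "2^k * x \<le> q k + 1" for k
    unfolding q_def by (linarith, linarith)
  have q0: "q 0 = 0" unfolding q_def using assms ceiling_unique[of 1 x] by simp
  have qs: "q (Suc k) = 2 * q k \<or> q (Suc k) = 2 * q k + 1" for k
  proof -
    have a: "q (Suc k) < 2 * (2^k * x)" "2 * (2^k * x) \<le> q (Suc k) + 1" using qb[of "Suc k"] by auto
    have b: "2 * q k < 2 * (2^k * x)" "2 * (2^k * x) \<le> 2 * q k + 2" using qb[of k] by auto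
    have "2 * q k \<le> q (Suc k)"
    proof -
      have "real_of_int (2 * q k) < real_of_int (q (Suc k) + 1)" using a b by linarith
      then show ?thesis by linarith
    qed
    moreover have "q (Suc k) \<le> 2 * q k + 1"
    proof -
      have "real_of_int (q (Suc k)) < real_of_int (2 * q k + 2)" using a b by linarith
      then show ?thesis by linarith
    qed
    ultimately show ?thesis by linarith
  qed
  define b where "b k = nat (q (Suc k) - 2 * q k)" for k
  have bq: "real (b k) = real_of_int (q (Suc k)) - 2 * real_of_int (q k)" for k
    using qs[of k] unfolding b_def by auto
  have bb: "bin b" unfolding bin_def b_def
  proof
    fix k show "nat (q (Suc k) - 2 * q k) \<in> {0, 1}" using qs[of k] by auto
  qed
  have ps: "(\<Sum>k<n. real (b k) / 2 ^ (k + 1)) = q n / 2^n" for n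
  proof (induction n)
    case 0 then show ?case using q0 by simp
  next
    case (Suc n)
    have "(\<Sum>k<Suc n. real (b k) / 2 ^ (k + 1)) = q n / 2^n + real (b n) / 2^(n+1)"
      using Suc by simp
    also have "\<dots> = q n / 2^n + (real_of_int (q (Suc n)) - 2 * real_of_int (q n)) / (2 * 2^n)"
      using bq[of n] by simp
    also have "\<dots> = q (Suc n) / 2^(Suc n)"
      by (simp add: diff_divide_distrib)
    finally show ?case .
  qed
  have lim: "(\<lambda>n. real_of_int (q n) / 2^n) \<longlonglongrightarrow> x"
  proof (rule tendsto_sandwich[where f="\<lambda>n. x - (1/2)^n" and h="\<lambda>n. x"])
    have "x - (1/2)^n \<le> real_of_int (q n) / 2 ^ n" for n
    proof -
      have "x \<le> (q n + 1)/2^n" using qb(2)[of n] by (simp add: field_simps)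
      then show ?thesis by (simp add: power_divide add_divide_distrib)
    qed
    then show "\<forall>\<^sub>F n in sequentially. x - (1/2)^n \<le> real_of_int (q n) / 2 ^ n"
      by simp
    show "\<forall>\<^sub>F n in sequentially. real_of_int (q n) / 2 ^ n \<le> x"
      using qb(1) by (auto simp: field_simps less_imp_le)
    show "(\<lambda>n. x - (1/2)^n) \<longlonglongrightarrow> x"
      using tendsto_diff[OF tendsto_const LIMSEQ_power_zero[of "1/2::real"]] by simp
  qed simp
  have "(\<lambda>n. \<Sum>k<n. real (b k) / 2 ^ (k + 1)) \<longlonglongrightarrow> x" using lim ps by simp
  then have "(\<lambda>k. real (b k) / 2 ^ (k + 1)) sums x" by (simp add: sums_def)
  then have vb: "val b = x" unfolding val_def using sums_unique by metis
  have inf: "infinite {k. b k = 1}"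
  proof
    assume fin: "finite {k. b k = 1}"
    then obtain K where K: "\<forall>k\<ge>K. b k \<noteq> 1"
      by (metis (mono_tags, lifting) finite_nat_set_iff_bounded_le mem_Collect_eq not_less_eq_eq)
    have K0: "\<forall>k\<ge>K. b k = 0" using K bb unfolding bin_def by auto
    have c: "real_of_int (q (K + i)) / 2^(K+i) = q K / 2^K" for i
    proof (induction i)
      case (Suc i)
      have "real (b (K+i)) = 0" using K0 by simp
      then have "real_of_int (q (Suc (K + i))) = 2 * real_of_int (q (K+i))" using bq[of "K+i"] by simp
      then show ?case using Suc by (simp add: field_simps)
    qed simp
    have "(\<lambda>i. real_of_int (q (i + K)) / 2^(i+K)) \<longlonglongrightarrow> x"
      using LIMSEQ_ignore_initial_segment[OF lim, of K] by simp
    then have "(\<lambda>i. real_of_int (q K) / 2^K) \<longlonglongrightarrow> x" using c by (simp add: add.commute)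
    then have "real_of_int (q K) / 2^K = x" using LIMSEQ_const_iff by blast
    then show False using qb(1)[of K] by (simp add: field_simps)
  qed
  show ?thesis using bb inf vb by blast
qed

lemma binexp_val: assumes "bin b" "infinite {k. b k = 1}" shows "binexp (val b) = b"
  unfolding binexp_def
proof (rule the_equality)
  show "(\<forall>k. b k \<in> {0, 1}) \<and> infinite {k. b k = 1} \<and> val b = (\<Sum>k. real (b k) / 2 ^ (k + 1))"
    using assms unfolding bin_def val_def by auto
next
  fix b' assume "(\<forall>k. b' k \<in> {0, 1}) \<and> infinite {k. b' k = 1} \<and> val b = (\<Sum>k. real (b' k) / 2 ^ (k + 1))"
  then show "b' = b" using val_inj[of b' b] assms unfolding bin_def val_def by auto
qed

definition Rs :: "(nat \<Rightarrow> nat) \<Rightarrow> real" where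
  "Rs b = (\<Sum>m. real (rho b m) / 2 ^ (m + 1))"

lemma R_val: assumes "bin b" "infinite {k. b k = 1}" shows "R (val b) = Rs b"
  using val_pos[OF assms] binexp_val[OF assms] unfolding R_def Rs_def by simp



definition pre :: "nat list \<Rightarrow> (nat \<Rightarrow> nat) \<Rightarrow> nat \<Rightarrow> nat" where
  "pre v t = (\<lambda>k. if k < length v then v ! k else t (k - length v))"

definition fv :: "nat list \<Rightarrow> real" where
  "fv v = (\<Sum>k<length v. real (v ! k) / 2 ^ (k + 1))"

definition Lists :: "nat \<Rightarrow> nat list set" where
  "Lists n = {xs. set xs \<subseteq> {0, 1} \<and> length xs = n}"

definition ones :: "nat list \<Rightarrow> nat" where
  "ones v = length (filter (\<lambda>d. d = 1) v)"

lemma bin_pre: "set v \<subseteq> {0,1} \<Longrightarrow> bin t \<Longrightarrow> bin (pre v t)"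
  unfolding bin_def pre_def by (auto dest: nth_mem)

lemma inf_pre: assumes "infinite {k. t k = 1}" shows "infinite {k. pre v t k = 1}"
proof -
  have "(\<lambda>k. k + length v) ` {k. t k = 1} \<subseteq> {k. pre v t k = 1}" unfolding pre_def by auto
  moreover have "infinite ((\<lambda>k. k + length v) ` {k. t k = 1})"
  proof
    assume "finite ((\<lambda>k. k + length v) ` {k. t k = 1})"
    then have "finite {k. t k = 1}" by (rule finite_imageD) (simp add: inj_on_def)
    then show False using assms by simp
  qed
  ultimately show ?thesis using finite_subset by blast
qed

lemma sh_pre: "sh (length v) (pre v t) = t"
  unfolding sh_def pre_def by auto

lemma val_pre: assumes "set v \<subseteq> {0,1}" "bin t"
  shows "val (pre v t) = fv v + val t / 2 ^ length v"
proof -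
  have "val (pre v t) = (\<Sum>k<length v. real (pre v t k) / 2 ^ (k + 1)) + val (sh (length v) (pre v t)) / 2 ^ length v"
    by (rule val_split[OF bin_pre[OF assms]])
  also have "(\<Sum>k<length v. real (pre v t k) / 2 ^ (k + 1)) = fv v"
    unfolding fv_def pre_def by simp
  finally show ?thesis by (simp add: sh_pre)
qed

lemma pre_sh: "pre (map b [0..<n]) (sh n b) = b"
  unfolding pre_def sh_def by auto

lemma fv_nonneg: "0 \<le> fv v" unfolding fv_def by (auto intro!: sum_nonneg)

lemma fv_Cons: "fv (a # u) = (real a + fv u) / 2"
proof -
  have "fv (a # u) = real a / 2 ^ (0 + 1) + (\<Sum>k<length u. real ((a # u) ! Suc k) / 2 ^ (Suc k + 1))"
    unfolding fv_def length_Cons sum.lessThan_Suc_shift by simp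
  also have "\<dots> = real a / 2 + (\<Sum>k<length u. real (u ! k) / 2 ^ (k + 2))" by simp
  also have "(\<Sum>k<length u. real (u ! k) / 2 ^ (k + 2)) = fv u / 2"
    unfolding fv_def sum_divide_distrib by (intro sum.cong) (auto simp: field_simps)
  finally show ?thesis by simp
qed

lemma fv_le: "set u \<subseteq> {0,1} \<Longrightarrow> fv u \<le> 1 - 1 / 2 ^ length u"
proof (induction u)
  case Nil then show ?case by (simp add: fv_def)
next
  case (Cons a u)
  then have a1: "real a \<le> 1" and f1: "fv u \<le> 1 - 1 / 2 ^ length u" by auto
  have "fv (a # u) = (real a + fv u) / 2" by (rule fv_Cons)
  also have "\<dots> \<le> (1 + (1 - 1 / 2 ^ length u)) / 2" using a1 f1 by (intro divide_right_mono) auto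
  also have "\<dots> = 1 - 1 / 2 ^ length (a # u)" by (simp add: field_simps)
  finally show ?case .
qed

lemma fv_sep: "set u \<subseteq> {0,1} \<Longrightarrow> set u' \<subseteq> {0,1} \<Longrightarrow> length u = length u' \<Longrightarrow> u \<noteq> u'
  \<Longrightarrow> 1 / 2 ^ length u \<le> \<bar>fv u - fv u'\<bar>"
proof (induction u arbitrary: u')
  case Nil then show ?case by simp
next
  case (Cons a u)
  then obtain a' w where u': "u' = a' # w" by (cases u') auto
  have ab: "a \<in> {0,1}" "a' \<in> {0,1}" "set u \<subseteq> {0,1}" "set w \<subseteq> {0,1}" "length u = length w"
    using Cons.prems u' by auto
  show ?case
  proof (cases "a = a'")
    case True
    then have "u \<noteq> w" using Cons.prems u' by auto
    then have "1 / 2 ^ length u \<le> \<bar>fv u - fv w\<bar>" using Cons.IH ab by auto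
    moreover have "fv (a # u) - fv u' = (fv u - fv w) / 2" using True u' by (simp add: fv_Cons add_divide_distrib)
    ultimately show ?thesis by simp
  next
    case False
    have b1: "fv u \<le> 1 - 1 / 2 ^ length u" using fv_le[OF ab(3)] .
    have b2: "fv w \<le> 1 - 1 / 2 ^ length u" using fv_le[OF ab(4)] ab(5) by simp
    have b: "0 \<le> fv u" "0 \<le> fv w" "fv u \<le> 1 - 1 / 2 ^ length u" "fv w \<le> 1 - 1 / 2 ^ length u"
      using fv_nonneg b1 b2 by auto
    from False ab have "(a = 1 \<and> a' = 0) \<or> (a = 0 \<and> a' = 1)" by auto
    then show ?thesis
    proof
      assume "a = 1 \<and> a' = 0"
      then have "fv (a # u) - fv u' = (1 + fv u - fv w) / 2" using u' by (simp add: fv_Cons diff_divide_distrib)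
      moreover have "1 / 2 ^ length u \<le> 1 + fv u - fv w" using b ab by linarith
      ultimately show ?thesis by simp
    next
      assume "a = 0 \<and> a' = 1"
      then have "fv (a # u) - fv u' = - ((1 + fv w - fv u) / 2)" using u' by (simp add: fv_Cons diff_divide_distrib)
      moreover have "1 / 2 ^ length u \<le> 1 + fv w - fv u" using b ab by linarith
      ultimately show ?thesis by simp
    qed
  qed
qed

lemma cnt_enum: assumes "infinite (S::nat set)" shows "card {x\<in>S. x < enumerate S m} = m"
proof -
  have "{x\<in>S. x < enumerate S m} = enumerate S ` {..<m}"
  proof
    show "{x \<in> S. x < enumerate S m} \<subseteq> enumerate S ` {..<m}"
    proof
      fix x assume x: "x \<in> {x \<in> S. x < enumerate S m}"
      then have "x \<in> range (enumerate S)" using range_enumerate[OF assms] by simp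
      then obtain i where i: "x = enumerate S i" by blast
      then have "i < m" using x enumerate_mono_iff[OF assms] by simp
      then show "x \<in> enumerate S ` {..<m}" using i by simp
    qed
    show "enumerate S ` {..<m} \<subseteq> {x \<in> S. x < enumerate S m}"
    proof
      fix y assume "y \<in> enumerate S ` {..<m}"
      then obtain i where i: "i < m" "y = enumerate S i" by blast
      have "y \<in> S" using i enumerate_in_set[OF assms] by simp
      moreover have "y < enumerate S m" using i enumerate_mono[OF i(1) assms] by simp
      ultimately show "y \<in> {x \<in> S. x < enumerate S m}" by simp
    qed
  qed
  moreover have "inj_on (enumerate S) {..<m}" using inj_enumerate[OF assms] by (rule inj_on_subset) simp
  ultimately show ?thesis using card_image by (metis card_lessThan)
qed

lemma enum_cnt: assumes "infinite (S::nat set)" "s \<in> S" shows "enumerate S (card {x\<in>S. x < s}) = s"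
proof -
  obtain i where i: "enumerate S i = s" using enumerate_Ex[OF assms] by blast
  have "card {x\<in>S. x < enumerate S i} = i" by (rule cnt_enum[OF assms(1)])
  then show ?thesis using i by simp
qed

lemma enum_prefix: assumes "infinite (S::nat set)" "infinite S'" "S \<inter> {..<n} = S' \<inter> {..<n}"
  "m < card (S \<inter> {..<n})"
shows "enumerate S m = enumerate S' m \<and> enumerate S m < n"
proof -
  define s where "s = enumerate S m"
  have cs: "card {x\<in>S. x < s} = m" unfolding s_def by (rule cnt_enum[OF assms(1)])
  have sn: "s < n"
  proof (rule ccontr)
    assume "\<not> s < n"
    then have "S \<inter> {..<n} \<subseteq> {x\<in>S. x < s}" by auto
    then have "card (S \<inter> {..<n}) \<le> card {x\<in>S. x < s}" by (intro card_mono) auto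
    then show False using cs assms(4) by simp
  qed
  have "s \<in> S" unfolding s_def by (rule enumerate_in_set[OF assms(1)])
  then have "s \<in> S \<inter> {..<n}" using sn by simp
  then have sS': "s \<in> S'" using assms(3) by simp
  have "{x\<in>S'. x < s} = {x\<in>S. x < s}"
  proof -
    have "{x\<in>S'. x < s} = S' \<inter> {..<n} \<inter> {..<s}" using sn by auto
    also have "\<dots> = S \<inter> {..<n} \<inter> {..<s}" using assms(3) by simp
    also have "\<dots> = {x\<in>S. x < s}" using sn by auto
    finally show ?thesis .
  qed
  then have "enumerate S' m = s" using enum_cnt[OF assms(2) sS'] cs by simp
  then show ?thesis using sn unfolding s_def by simp
qed

lemma bin_rho: "bin (rho b)" unfolding bin_def rho_def by (auto simp: Let_def)

lemma Rs_val: "Rs b = val (rho b)" unfolding Rs_def val_def ..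

lemma ones_card: "ones v = card {k. k < length v \<and> v ! k = 1}"
  unfolding ones_def by (rule length_filter_conv_card)

lemma pre_ones: "{k. pre v t k = 1} \<inter> {..<length v} = {k. k < length v \<and> v ! k = 1}"
  unfolding pre_def by auto

lemma ones_le: "ones v \<le> length v" unfolding ones_def by simp

definition Cv :: "nat list \<Rightarrow> real" where
  "Cv v = (\<Sum>m<ones v. real (rho (pre v (\<lambda>_. 1)) m) / 2 ^ (m + 1))"

lemma inf_one: "infinite {k::nat. (\<lambda>_. 1::nat) k = 1}" by simp

lemma Rs_pre: assumes "infinite {k. t k = 1}"
  shows "Rs (pre v t) = Cv v + val (sh (ones v) (rho (pre v t))) / 2 ^ (ones v)"
proof -
  have "Rs (pre v t) = (\<Sum>m<ones v. real (rho (pre v t) m) / 2 ^ (m + 1)) + val (sh (ones v) (rho (pre v t))) / 2 ^ (ones v)"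
    unfolding Rs_val by (rule val_split[OF bin_rho])
  moreover have "(\<Sum>m<ones v. real (rho (pre v t) m) / 2 ^ (m + 1)) = Cv v"
    unfolding Cv_def
  proof (intro sum.cong refl)
    fix m assume m: "m \<in> {..<ones v}"
    have "enumerate {k. pre v t k = 1} m = enumerate {k. pre v (\<lambda>_. 1) k = 1} m"
    proof -
      have e1: "{k. pre v t k = 1} \<inter> {..<length v} = {k. pre v (\<lambda>_. 1) k = 1} \<inter> {..<length v}"
        by (simp only: pre_ones)
      have e2: "m < card ({k. pre v t k = 1} \<inter> {..<length v})"
        using m unfolding pre_ones ones_card[symmetric] by simp
      show ?thesis using enum_prefix[OF inf_pre[OF assms, of v] inf_pre[OF inf_one, of v] e1 e2] by simp
    qed
    then show "real (rho (pre v t) m) / 2 ^ (m + 1) = real (rho (pre v (\<lambda>_. 1)) m) / 2 ^ (m + 1)"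
      unfolding rho_def by simp
  qed
  ultimately show ?thesis by simp
qed



definition rr :: "nat \<Rightarrow> nat list \<Rightarrow> nat \<Rightarrow> nat" where
  "rr n e i = (pre e (\<lambda>_. 0) i + n + 1) mod 2"

definition tle :: "nat \<Rightarrow> nat list \<Rightarrow> nat \<Rightarrow> nat" where
  "tle n e = (\<lambda>p. if p mod 2 = rr n e (p div 2) then 1 else 0)"

definition B :: "nat list \<Rightarrow> nat list \<Rightarrow> nat \<Rightarrow> nat" where
  "B v e = pre v (pre [0] (tle (length v) e))"

lemma rr_lt: "rr n e i < 2" unfolding rr_def by simp

lemma tle_at: "tle n e (2 * i + rr n e i) = 1"
  unfolding tle_def using rr_lt[of n e i] by simp

lemma bin_tle: "bin (tle n e)" unfolding bin_def tle_def by auto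

lemma inf_tle: "infinite {k. tle n e k = 1}"
  unfolding infinite_nat_iff_unbounded
proof
  fix m
  have "m < 2 * Suc m + rr n e (Suc m)" by simp
  then show "\<exists>k>m. k \<in> {k. tle n e k = 1}" using tle_at by blast
qed

lemma bin_B: "set v \<subseteq> {0,1} \<Longrightarrow> bin (B v e)"
  unfolding B_def by (intro bin_pre bin_tle) auto

lemma inf_B: "infinite {k. B v e k = 1}"
  unfolding B_def by (intro inf_pre inf_tle)

lemma val_B: assumes "set v \<subseteq> {0,1}"
  shows "fv v \<le> val (B v e) \<and> val (B v e) \<le> fv v + 1 / 2 ^ (length v + 1)"
proof -
  have b0: "bin (pre [0] (tle (length v) e))" by (intro bin_pre bin_tle) auto
  have v1: "val (pre [0] (tle (length v) e)) = val (tle (length v) e) / 2"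
    using val_pre[of "[0]" "tle (length v) e"] bin_tle by (simp add: fv_def)
  have "val (B v e) = fv v + val (pre [0] (tle (length v) e)) / 2 ^ length v"
    unfolding B_def using val_pre[OF assms b0] .
  moreover have "0 \<le> val (tle (length v) e)" "val (tle (length v) e) \<le> 1"
    using val_nonneg val_le1 bin_tle by auto
  ultimately show ?thesis using v1 by (auto simp: divide_right_mono)
qed

lemma B_eq: "B v e k = (if k < length v then v ! k else if k = length v then 0
   else tle (length v) e (k - length v - 1))"
  unfolding B_def pre_def by auto

lemma s0_mem: "B v e (length v + 1 + (2 * i + rr (length v) e i)) = 1"
  using tle_at[of "length v" e i] by (simp add: B_eq)

lemma r_inj: "inj_on (\<lambda>i'. n + 1 + (2 * i' + rr m e i')) A"
proof (rule inj_onI)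
  fix a b assume "n + 1 + (2 * a + rr m e a) = n + 1 + (2 * b + rr m e b)"
  then have "2 * a + rr m e a = 2 * b + rr m e b" by simp
  then show "a = b" using rr_lt[of m e a] rr_lt[of m e b] by linarith
qed

lemma r_disj: "{k. k < n \<and> v ! k = 1} \<inter> (\<lambda>i'. n + 1 + (2 * i' + rr m e i')) ` A = {}" by auto

lemma r_card: "card ({k. k < length v \<and> v ! k = 1} \<union> (\<lambda>i'. length v + 1 + (2 * i' + rr m e i')) ` {..<i})
   = ones v + i"
proof -
  have c1: "card ((\<lambda>i'. length v + 1 + (2 * i' + rr m e i')) ` {..<i}) = i"
    using card_image[OF r_inj, of "length v" m e "{..<i}"] by simp
  have "card ({k. k < length v \<and> v ! k = 1} \<union> (\<lambda>i'. length v + 1 + (2 * i' + rr m e i')) ` {..<i})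
     = card {k. k < length v \<and> v ! k = 1} + card ((\<lambda>i'. length v + 1 + (2 * i' + rr m e i')) ` {..<i})"
    by (rule card_Un_disjoint) (auto simp: r_disj)
  then show ?thesis using c1 ones_card by simp
qed

lemma par: "d \<le> 1 \<Longrightarrow> even (n + 1 + (2 * i + (d + n + 1) mod 2)) \<longleftrightarrow> d = 0" for d n :: nat
  by presburger

lemma rho_B: assumes "set e \<subseteq> {0,1}"
  shows "rho (B v e) (i + ones v) = pre e (\<lambda>_. 0) i"
proof -
  let ?n = "length v" let ?r = "rr (length v) e"
  let ?S = "{k. B v e k = 1}"
  define s0 where "s0 = ?n + 1 + (2 * i + ?r i)"
  have s0S: "s0 \<in> ?S" unfolding s0_def using s0_mem[of v e i] by simp
  have rl: "?r i' < 2" for i' by (rule rr_lt)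
  have seteq: "{x\<in>?S. x < s0} = {k. k < ?n \<and> v ! k = 1} \<union> (\<lambda>i'. ?n + 1 + (2 * i' + ?r i')) ` {..<i}"
  proof (intro set_eqI iffI)
    fix x assume x: "x \<in> {x\<in>?S. x < s0}"
    show "x \<in> {k. k < ?n \<and> v ! k = 1} \<union> (\<lambda>i'. ?n + 1 + (2 * i' + ?r i')) ` {..<i}"
    proof (cases "x < ?n")
      case True then show ?thesis using x by (simp add: B_eq)
    next
      case False
      then have "x \<noteq> ?n" using x by (auto simp: B_eq)
      define p where "p = x - ?n - 1"
      have p: "x = ?n + 1 + p" using False \<open>x \<noteq> ?n\<close> unfolding p_def by linarith
      have tp: "tle ?n e p = 1" using x p by (simp add: B_eq)
      then have pm: "p mod 2 = ?r (p div 2)" unfolding tle_def by (auto split: if_splits)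
      define i' where "i' = p div 2"
      have "p = 2 * (p div 2) + p mod 2" by simp
      then have pe: "p = 2 * i' + ?r i'" unfolding i'_def using pm by simp
      have plt: "p < 2 * i + ?r i" using x p unfolding s0_def by simp
      have "i' < i"
      proof (rule ccontr)
        assume "\<not> i' < i"
        then consider "i' = i" | "i + 1 \<le> i'" by linarith
        then show False
        proof cases
          case 1 then show False using pe plt by simp
        next
          case 2 then show False using pe plt rl[of i] by linarith
        qed
      qed
      then show ?thesis using p pe by auto
    qed
  next
    fix x assume "x \<in> {k. k < ?n \<and> v ! k = 1} \<union> (\<lambda>i'. ?n + 1 + (2 * i' + ?r i')) ` {..<i}"
    then show "x \<in> {x\<in>?S. x < s0}"
    proof
      assume "x \<in> {k. k < ?n \<and> v ! k = 1}" then show ?thesis unfolding s0_def by (auto simp: B_eq)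
    next
      assume "x \<in> (\<lambda>i'. ?n + 1 + (2 * i' + ?r i')) ` {..<i}"
      then obtain i' where i': "i' < i" "x = ?n + 1 + (2 * i' + ?r i')" by auto
      have "2 * i' + ?r i' < 2 * i + ?r i" using i'(1) rl[of i'] by linarith
      then have "x < s0" unfolding s0_def using i' by simp
      moreover have "B v e x = 1" using i' tle_at[of ?n e i'] by (simp add: B_eq)
      ultimately show ?thesis by simp
    qed
  qed
  have "card {x\<in>?S. x < s0} = ones v + i"
    unfolding seteq by (rule r_card)
  then have "enumerate ?S (ones v + i) = s0" using enum_cnt[OF inf_B s0S] by simp
  then have en: "enumerate ?S (i + ones v) = s0" by (simp only: add.commute)
  have d1: "pre e (\<lambda>_. 0) i \<le> 1" using assms unfolding pre_def by (auto dest: nth_mem)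
  have ev: "even s0 \<longleftrightarrow> pre e (\<lambda>_. 0) i = 0"
    unfolding s0_def rr_def by (rule par[OF d1])
  have "(if even s0 then 0 else 1) = pre e (\<lambda>_. 0) i"
  proof (cases "pre e (\<lambda>_. 0) i = 0")
    case True then show ?thesis using ev by simp
  next
    case False then have "pre e (\<lambda>_. 0) i = 1" using d1 by linarith
    then show ?thesis using ev by simp
  qed
  then show ?thesis unfolding rho_def Let_def en .
qed

lemma Rs_B: assumes "set e \<subseteq> {0,1}"
  shows "Rs (B v e) = Cv v + fv e / 2 ^ ones v"
proof -
  have i0: "infinite {k. pre [0] (tle (length v) e) k = 1}" by (intro inf_pre inf_tle)
  have "Rs (B v e) = Cv v + val (sh (ones v) (rho (B v e))) / 2 ^ ones v"
    unfolding B_def by (rule Rs_pre[OF i0])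
  moreover have "sh (ones v) (rho (B v e)) = pre e (\<lambda>_. 0)"
    unfolding sh_def using rho_B[OF assms] by auto
  moreover have "val (pre e (\<lambda>_. 0)) = fv e"
    using val_pre[OF assms, of "\<lambda>_. 0"] by (simp add: bin_def val_def)
  ultimately show ?thesis by simp
qed



lemma Lists_fin: "finite (Lists n)" unfolding Lists_def by (rule finite_lists_length_eq) simp

lemma Lists_card: "card (Lists n) = 2 ^ n"
proof -
  have f: "finite {0::nat,1}" by simp
  have "card (Lists n) = card {0::nat,1} ^ n" unfolding Lists_def by (rule card_lists_length_eq[OF f])
  then show ?thesis by (simp add: numeral_2_eq_2)
qed

lemma Lists_Suc: "Lists (Suc n) = Cons 0 ` Lists n \<union> Cons 1 ` Lists n"
proof (intro set_eqI iffI)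
  fix x assume "x \<in> Lists (Suc n)"
  then obtain a u where x: "x = a # u" "a \<in> {0,1}" "u \<in> Lists n"
    unfolding Lists_def by (cases x) auto
  then show "x \<in> Cons 0 ` Lists n \<union> Cons 1 ` Lists n" by auto
qed (auto simp: Lists_def)

lemma ones_Cons: "ones (a # u) = (if a = 1 then 1 else 0) + ones u" unfolding ones_def by simp

lemma ones_le_n: "v \<in> Lists n \<Longrightarrow> ones v \<le> n" unfolding Lists_def using ones_le by auto

lemma sum_Lists: "(\<Sum>v\<in>Lists n. (2::nat) ^ (n - ones v)) = 3 ^ n"
proof (induction n)
  case 0
  have "Lists 0 = {[]}" unfolding Lists_def by auto
  then show ?case by (simp add: ones_def)
next
  case (Suc n)
  have disj: "Cons 0 ` Lists n \<inter> Cons 1 ` Lists n = {}" by auto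
  have "(\<Sum>v\<in>Lists (Suc n). (2::nat) ^ (Suc n - ones v))
      = (\<Sum>v\<in>Cons 0 ` Lists n. (2::nat) ^ (Suc n - ones v)) + (\<Sum>v\<in>Cons 1 ` Lists n. (2::nat) ^ (Suc n - ones v))"
    unfolding Lists_Suc by (rule sum.union_disjoint) (auto simp: Lists_fin disj)
  also have "(\<Sum>v\<in>Cons 0 ` Lists n. (2::nat) ^ (Suc n - ones v)) = (\<Sum>u\<in>Lists n. 2 * 2 ^ (n - ones u))"
  proof -
    have "(\<Sum>v\<in>Cons 0 ` Lists n. (2::nat) ^ (Suc n - ones v)) = (\<Sum>u\<in>Lists n. (2::nat) ^ (Suc n - ones (0 # u)))"
      by (rule sum.reindex_cong[where l="Cons 0"]) auto
    also have "\<dots> = (\<Sum>u\<in>Lists n. 2 * 2 ^ (n - ones u))"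
    proof (rule sum.cong[OF refl])
      fix u assume "u \<in> Lists n"
      then have "ones u \<le> n" by (rule ones_le_n)
      then have "Suc n - ones (0 # u) = Suc (n - ones u)" by (simp add: ones_Cons)
      then show "(2::nat) ^ (Suc n - ones (0 # u)) = 2 * 2 ^ (n - ones u)" by simp
    qed
    finally show ?thesis .
  qed
  also have "(\<Sum>v\<in>Cons 1 ` Lists n. (2::nat) ^ (Suc n - ones v)) = (\<Sum>u\<in>Lists n. 2 ^ (n - ones u))"
  proof -
    have "(\<Sum>v\<in>Cons 1 ` Lists n. (2::nat) ^ (Suc n - ones v)) = (\<Sum>u\<in>Lists n. (2::nat) ^ (Suc n - ones (1 # u)))"
      by (rule sum.reindex_cong[where l="Cons 1"]) auto
    also have "\<dots> = (\<Sum>u\<in>Lists n. 2 ^ (n - ones u))"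
      by (rule sum.cong[OF refl]) (simp add: ones_Cons)
    finally show ?thesis .
  qed
  finally show ?case using Suc.IH by (simp add: sum_distrib_left[symmetric])
qed

lemma box_upper: assumes "finite F" "E \<subseteq> \<Union>F" "\<forall>U\<in>F. bounded U \<and> diameter U \<le> \<delta>"
  shows "box_count \<delta> E \<le> card F"
  unfolding box_count_def
  by (rule cInf_lower) (use assms in auto)

lemma box_lower: assumes "finite J" "\<forall>a\<in>J. p a \<in> E" "\<forall>a\<in>J. \<forall>b\<in>J. a \<noteq> b \<longrightarrow> \<delta> < dist (p a) (p b)"
  and ex: "finite Fc" "E \<subseteq> \<Union>Fc" "\<forall>U\<in>Fc. bounded U \<and> diameter U \<le> \<delta>"
  shows "card J \<le> box_count \<delta> (E::'a::metric_space set)"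
  unfolding box_count_def
proof (rule cInf_greatest)
  show "{card F |F. finite F \<and> E \<subseteq> \<Union> F \<and> (\<forall>U\<in>F. bounded U \<and> diameter U \<le> \<delta>)} \<noteq> {}"
    using ex by blast
next
  fix k assume "k \<in> {card F |F. finite F \<and> E \<subseteq> \<Union> F \<and> (\<forall>U\<in>F. bounded U \<and> diameter U \<le> \<delta>)}"
  then obtain F where F: "k = card F" "finite F" "E \<subseteq> \<Union> F" "\<forall>U\<in>F. bounded U \<and> diameter U \<le> \<delta>"
    by blast
  define g where "g a = (SOME U. U \<in> F \<and> p a \<in> U)" for a
  have g: "g a \<in> F \<and> p a \<in> g a" if "a \<in> J" for a
  proof -
    have "\<exists>U. U \<in> F \<and> p a \<in> U" using F(3) assms(2) that by blast
    then show ?thesis unfolding g_def by (rule someI_ex)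
  qed
  have "inj_on g J"
  proof (rule inj_onI)
    fix a b assume ab: "a \<in> J" "b \<in> J" "g a = g b"
    show "a = b"
    proof (rule ccontr)
      assume "a \<noteq> b"
      then have "\<delta> < dist (p a) (p b)" using assms(3) ab by blast
      moreover have "dist (p a) (p b) \<le> diameter (g a)"
        using g[OF ab(1)] g[OF ab(2)] ab(3) F(4) by (intro diameter_bounded_bound) auto
      moreover have "diameter (g a) \<le> \<delta>" using g[OF ab(1)] F(4) by auto
      ultimately show False by simp
    qed
  qed
  moreover have "g ` J \<subseteq> F" using g by auto
  ultimately have "card J \<le> card F" using F(2) by (metis card_image card_mono)
  then show "card J \<le> k" using F(1) by simp
qed

lemma sqrt_sum_le: "0 \<le> a \<Longrightarrow> 0 \<le> b \<Longrightarrow> sqrt (a\<^sup>2 + b\<^sup>2) \<le> a + (b::real)"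
  by (rule real_le_lsqrt) (auto simp: power2_eq_square algebra_simps)

lemma box_diam: assumes "S \<subseteq> {a..a+h} \<times> {c..c+h}" "0 \<le> h"
  shows "bounded S \<and> diameter S \<le> 2 * (h::real)"
proof
  show "bounded S" using assms(1) by (rule bounded_subset[OF bounded_Times[OF bounded_closed_interval bounded_closed_interval]])
  show "diameter S \<le> 2 * h"
  proof (cases "S = {}")
    case True then show ?thesis using assms by simp
  next
    case False
    have "dist p q \<le> 2 * h" if "p \<in> S" "q \<in> S" for p q
    proof -
      obtain x y x' y' where pq: "p = (x, y)" "q = (x', y')" by (cases p, cases q) auto
      have m: "x \<in> {a..a+h}" "x' \<in> {a..a+h}" "y \<in> {c..c+h}" "y' \<in> {c..c+h}"
        using that assms(1) pq by auto
      have "dist x x' \<le> h" "dist y y' \<le> h" using m unfolding dist_real_def by auto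
      moreover have "dist p q \<le> dist x x' + dist y y'"
        unfolding pq dist_Pair_Pair by (rule sqrt_sum_le) auto
      ultimately show ?thesis by simp
    qed
    then show ?thesis unfolding diameter_def using False
      by (auto intro!: cSUP_least)
  qed
qed



definition Q :: "nat \<Rightarrow> nat list \<Rightarrow> nat \<Rightarrow> (real \<times> real) set" where
  "Q n v i = {fv v .. fv v + 1 / 2 ^ n} \<times> {Cv v + real i / 2 ^ n .. Cv v + (real i + 1) / 2 ^ n}"

definition Idx :: "nat \<Rightarrow> (nat list \<times> nat) set" where
  "Idx n = (SIGMA v:Lists n. {..2 ^ (n - ones v)})"

definition Fam :: "nat \<Rightarrow> (real \<times> real) set set" where
  "Fam n = (\<lambda>(v, i). Q n v i) ` Idx n \<union> {{(0, 2 / 3)}}"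

lemma Idx_fin: "finite (Idx n)" unfolding Idx_def using Lists_fin by auto

lemma Idx_card: "card (Idx n) = 3 ^ n + 2 ^ n"
proof -
  have "card (Idx n) = (\<Sum>v\<in>Lists n. card {..(2::nat) ^ (n - ones v)})"
    unfolding Idx_def using Lists_fin by (subst card_SigmaI) auto
  also have "\<dots> = (\<Sum>v\<in>Lists n. 2 ^ (n - ones v) + 1)" by simp
  also have "\<dots> = (\<Sum>v\<in>Lists n. (2::nat) ^ (n - ones v)) + (\<Sum>v\<in>Lists n. 1)" by (rule sum.distrib)
  also have "\<dots> = 3 ^ n + 2 ^ n" by (simp add: sum_Lists Lists_card)
  finally show ?thesis .
qed

lemma Fam_fin: "finite (Fam n)" unfolding Fam_def using Idx_fin by auto

lemma Fam_card: "card (Fam n) \<le> 3 ^ (n + 1)"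
proof -
  have "card (Fam n) \<le> card ((\<lambda>(v, i). Q n v i) ` Idx n) + card {{(0::real, 2 / 3::real)}}"
    unfolding Fam_def by (rule card_Un_le)
  also have "\<dots> \<le> card (Idx n) + 1" using card_image_le[OF Idx_fin] by simp
  also have "\<dots> = 3 ^ n + 2 ^ n + 1" by (simp add: Idx_card)
  also have "\<dots> \<le> 3 ^ (n + 1)"
  proof -
    have "(2::nat) ^ n \<le> 3 ^ n" by (rule power_mono) auto
    moreover have "(1::nat) \<le> 3 ^ n" by simp
    moreover have "(3::nat) ^ (n + 1) = 3 * 3 ^ n" by simp
    ultimately show ?thesis by linarith
  qed
  finally show ?thesis .
qed

lemma Fam_diam: assumes "U \<in> Fam n" shows "bounded U \<and> diameter U \<le> 2 / 2 ^ n"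
proof -
  { fix v i assume U: "U = Q n v i"
    have "U \<subseteq> {fv v .. fv v + 1 / 2 ^ n} \<times> {Cv v + real i / 2 ^ n .. (Cv v + real i / 2 ^ n) + 1 / 2 ^ n}"
      unfolding U Q_def by (auto simp: add_divide_distrib)
    then have "bounded U \<and> diameter U \<le> 2 * (1 / 2 ^ n)" by (rule box_diam) simp
    then have ?thesis by simp }
  then show ?thesis using assms unfolding Fam_def by auto
qed

lemma Fam_closed: assumes "U \<in> Fam n" shows "closed U"
  using assms unfolding Fam_def Q_def by (auto intro!: closed_Times)

lemma graph_cover: "graphR \<subseteq> \<Union>(Fam n)"
proof
  fix p assume "p \<in> graphR"
  then obtain x where p: "p = (x, R x)" "0 \<le> x" "x \<le> 1" unfolding graphR_def by auto
  show "p \<in> \<Union>(Fam n)"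
  proof (cases "x = 0")
    case True
    then have "p = (0, 2/3)" using p unfolding R_def by simp
    then show ?thesis unfolding Fam_def by auto
  next
    case False
    then have "0 < x" using p by simp
    then obtain b where b: "bin b" "infinite {k. b k = 1}" "val b = x" using val_exists p(3) by blast
    define v where "v = map b [0..<n]"
    define t where "t = sh n b"
    have lv: "length v = n" unfolding v_def by simp
    have bv: "b = pre v t" unfolding v_def t_def by (rule pre_sh[symmetric])
    have v01: "set v \<subseteq> {0,1}"
    proof
      fix d assume "d \<in> set v"
      then obtain k where "d = b k" unfolding v_def by auto
      then show "d \<in> {0,1}" using b(1) unfolding bin_def by simp
    qed
    have vL: "v \<in> Lists n" unfolding Lists_def using v01 lv by simp
    have bt: "bin t" unfolding t_def by (rule bin_sh[OF b(1)])
    have it: "infinite {k. t k = 1}" unfolding t_def by (rule inf_sh[OF b(2)])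
    have xv: "x = fv v + val t / 2 ^ n" using b(3) val_pre[OF v01 bt] bv lv by simp
    have vt: "0 \<le> val t" "val t \<le> 1" using val_nonneg[OF bt] val_le1[OF bt] by auto
    define j where "j = ones v"
    have jn: "j \<le> n" unfolding j_def using ones_le_n[OF vL] .
    define T where "T = val (sh j (rho (pre v t)))"
    have T: "0 \<le> T" "T \<le> 1" unfolding T_def using val_nonneg val_le1 bin_sh bin_rho by auto
    have Rx: "R x = Cv v + T / 2 ^ j"
      using R_val[OF b(1,2)] b(3) Rs_pre[OF it, of v] bv unfolding T_def j_def by simp
    define z where "z = T * 2 ^ (n - j)"
    have pw: "(2::real) ^ (n - j) = 2 ^ n / 2 ^ j" using jn by (simp add: power_diff)
    have Rz: "R x = Cv v + z / 2 ^ n" unfolding Rx z_def pw by simp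
    have z0: "0 \<le> z" "z \<le> 2 ^ (n - j)" unfolding z_def using T by auto
    define i where "i = nat \<lfloor>z\<rfloor>"
    have iz: "real i \<le> z" "z < real i + 1" unfolding i_def using z0 by linarith+
    have fl: "\<lfloor>z\<rfloor> \<le> 2 ^ (n - j)"
    proof -
      have "z \<le> real_of_int (2 ^ (n - j))" using z0 by simp
      then show ?thesis by linarith
    qed
    have ii: "i \<le> 2 ^ (n - j)" unfolding i_def using fl z0
      by (metis floor_le_zero nat_le_iff nat_zero_as_int of_nat_numeral of_nat_power zero_le_power)
    have "(v, i) \<in> Idx n" unfolding Idx_def using vL ii j_def by auto
    moreover have "p \<in> Q n v i"
    proof -
      have "fv v \<le> x" "x \<le> fv v + 1 / 2 ^ n" using xv vt by (auto simp: divide_right_mono)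
      moreover have "Cv v + real i / 2 ^ n \<le> R x" "R x \<le> Cv v + (real i + 1) / 2 ^ n"
        unfolding Rz using iz by (auto simp: divide_right_mono)
      ultimately show ?thesis unfolding Q_def p by simp
    qed
    ultimately show ?thesis unfolding Fam_def by auto
  qed
qed

lemma closure_cover: "closure graphR \<subseteq> \<Union>(Fam n)"
  by (rule closure_minimal[OF graph_cover]) (use Fam_fin Fam_closed in auto)



definition Jdx :: "nat \<Rightarrow> (nat list \<times> nat list) set" where
  "Jdx n = (SIGMA v:Lists n. Lists (n - ones v))"

definition pt :: "nat list \<times> nat list \<Rightarrow> real \<times> real" where
  "pt a = (val (B (fst a) (snd a)), Rs (B (fst a) (snd a)))"

lemma Jdx_fin: "finite (Jdx n)" unfolding Jdx_def using Lists_fin by auto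

lemma Jdx_card: "card (Jdx n) = 3 ^ n"
proof -
  have "card (Jdx n) = (\<Sum>v\<in>Lists n. card (Lists (n - ones v)))"
    unfolding Jdx_def using Lists_fin by (subst card_SigmaI) auto
  also have "\<dots> = 3 ^ n" by (simp add: Lists_card sum_Lists)
  finally show ?thesis .
qed

lemma pt_graph: assumes "a \<in> Jdx n" shows "pt a \<in> graphR"
proof -
  obtain v e where a: "a = (v, e)" "v \<in> Lists n" "e \<in> Lists (n - ones v)" using assms unfolding Jdx_def by auto
  have v01: "set v \<subseteq> {0,1}" using a(2) unfolding Lists_def by simp
  have bb: "bin (B v e)" by (rule bin_B[OF v01])
  have "R (val (B v e)) = Rs (B v e)" by (rule R_val[OF bb inf_B])
  moreover have "0 \<le> val (B v e)" "val (B v e) \<le> 1" using val_nonneg[OF bb] val_le1[OF bb] by auto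
  ultimately show ?thesis unfolding graphR_def pt_def a by auto
qed

lemma pt_sep: assumes "a \<in> Jdx n" "b \<in> Jdx n" "a \<noteq> b"
  shows "1 / 2 ^ (n + 1) \<le> dist (pt a) (pt b)"
proof -
  obtain v e where a: "a = (v, e)" "v \<in> Lists n" "e \<in> Lists (n - ones v)" using assms unfolding Jdx_def by auto
  obtain v' e' where b: "b = (v', e')" "v' \<in> Lists n" "e' \<in> Lists (n - ones v')" using assms unfolding Jdx_def by auto
  have v01: "set v \<subseteq> {0,1}" "length v = n" "set v' \<subseteq> {0,1}" "length v' = n"
    using a(2) b(2) unfolding Lists_def by auto
  have e01: "set e \<subseteq> {0,1}" "length e = n - ones v" "set e' \<subseteq> {0,1}" "length e' = n - ones v'"
    using a(3) b(3) unfolding Lists_def by auto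
  show ?thesis
  proof (cases "v = v'")
    case False
    have s: "1 / 2 ^ n \<le> \<bar>fv v - fv v'\<bar>" using fv_sep[OF v01(1) v01(3)] v01 False by simp
    have x1: "fv v \<le> val (B v e)" "val (B v e) \<le> fv v + 1 / 2 ^ (n + 1)" using val_B[OF v01(1), of e] v01 by auto
    have x2: "fv v' \<le> val (B v' e')" "val (B v' e') \<le> fv v' + 1 / 2 ^ (n + 1)" using val_B[OF v01(3), of e'] v01 by auto
    have h: "1 / 2 ^ n = 2 * (1 / (2::real) ^ (n + 1))" by simp
    have "1 / 2 ^ (n + 1) \<le> \<bar>val (B v e) - val (B v' e')\<bar>" using s x1 x2 unfolding h by linarith
    also have "\<dots> = dist (fst (pt a)) (fst (pt b))" unfolding pt_def a b by (simp add: dist_real_def)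
    also have "\<dots> \<le> dist (pt a) (pt b)" by (rule dist_fst_le)
    finally show ?thesis .
  next
    case True
    then have "e \<noteq> e'" using assms(3) a b by simp
    then have s: "1 / 2 ^ (n - ones v) \<le> \<bar>fv e - fv e'\<bar>" using fv_sep[OF e01(1) e01(3)] e01 True by simp
    have jn: "ones v \<le> n" using ones_le_n[OF a(2)] .
    have y: "Rs (B v e) - Rs (B v' e') = (fv e - fv e') / 2 ^ ones v"
      using Rs_B[OF e01(1), of v] Rs_B[OF e01(3), of v] True by (simp add: diff_divide_distrib)
    have pw: "(1::real) / 2 ^ n = (1 / 2 ^ (n - ones v)) / 2 ^ ones v"
      using jn by (simp add: power_diff)
    have "1 / 2 ^ (n + 1) \<le> (1::real) / 2 ^ n" by (simp add: field_simps)
    also have "\<dots> \<le> \<bar>fv e - fv e'\<bar> / 2 ^ ones v" unfolding pw by (rule divide_right_mono[OF s]) simp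
    also have "\<dots> = \<bar>Rs (B v e) - Rs (B v' e')\<bar>" unfolding y by simp
    also have "\<dots> = dist (snd (pt a)) (snd (pt b))" unfolding pt_def a b by (simp add: dist_real_def)
    also have "\<dots> \<le> dist (pt a) (pt b)" by (rule dist_snd_le)
    finally show ?thesis .
  qed
qed

definition good :: "(real \<times> real) set \<Rightarrow> bool" where
  "good E \<longleftrightarrow> E = graphR \<or> E = closure graphR"

lemma good_cover: "good E \<Longrightarrow> E \<subseteq> \<Union>(Fam n)"
  unfolding good_def using graph_cover[of n] closure_cover[of n] by auto

lemma good_sup: "good E \<Longrightarrow> graphR \<subseteq> E"
  unfolding good_def using closure_subset by auto

lemma N_upper: assumes "good E" "2 / 2 ^ n \<le> \<delta>" shows "box_count \<delta> E \<le> 3 ^ (n + 1)"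
proof -
  have "box_count \<delta> E \<le> card (Fam n)"
  proof (rule box_upper[OF Fam_fin good_cover[OF assms(1)]])
    show "\<forall>U\<in>Fam n. bounded U \<and> diameter U \<le> \<delta>"
    proof
      fix U assume "U \<in> Fam n"
      then have "bounded U \<and> diameter U \<le> 2 / 2 ^ n" by (rule Fam_diam)
      then show "bounded U \<and> diameter U \<le> \<delta>" using assms(2) by linarith
    qed
  qed
  then show ?thesis using Fam_card order_trans by blast
qed

lemma N_lower: assumes "good E" "0 < \<delta>" "\<delta> < 1 / 2 ^ (n + 1)" shows "3 ^ n \<le> box_count \<delta> E"
proof -
  obtain m where m: "(1/2::real) ^ m < \<delta> / 2" using real_arch_pow_inv[of "\<delta>/2" "1/2::real"] assms(2) by auto
  have m2: "2 / 2 ^ m \<le> \<delta>" using m by (simp add: power_divide field_simps)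
  have "card (Jdx n) \<le> box_count \<delta> E"
  proof (rule box_lower[where p=pt and Fc="Fam m"])
    show "finite (Jdx n)" by (rule Jdx_fin)
    show "\<forall>a\<in>Jdx n. pt a \<in> E" using pt_graph good_sup[OF assms(1)] by blast
    show "\<forall>a\<in>Jdx n. \<forall>b\<in>Jdx n. a \<noteq> b \<longrightarrow> \<delta> < dist (pt a) (pt b)"
      using pt_sep assms(3) by (meson less_le_trans)
    show "finite (Fam m)" by (rule Fam_fin)
    show "E \<subseteq> \<Union> (Fam m)" by (rule good_cover[OF assms(1)])
    show "\<forall>U\<in>Fam m. bounded U \<and> diameter U \<le> \<delta>"
    proof
      fix U assume "U \<in> Fam m"
      then have "bounded U \<and> diameter U \<le> 2 / 2 ^ m" by (rule Fam_diam)
      then show "bounded U \<and> diameter U \<le> \<delta>" using m2 by linarith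
    qed
  qed
  then show ?thesis using Jdx_card by simp
qed



lemma box_bounds: assumes "good E" "0 < \<delta>" "\<delta> < 1/4"
  shows "(- ln \<delta>) * (ln 3 / ln 2) - 2 * ln 3 \<le> ln (real (box_count \<delta> E)) \<and>
         ln (real (box_count \<delta> E)) \<le> (- ln \<delta>) * (ln 3 / ln 2) + 3 * ln 3"
proof -
  have l2: "0 < ln (2::real)" by simp
  have l3: "0 < ln (3::real)" by simp
  define L where "L = - ln \<delta> / ln 2"
  have lnd: "ln \<delta> = - L * ln 2" unfolding L_def using l2 by simp
  have "ln \<delta> < ln (1/4)" using assms(2,3) by simp
  moreover have "ln (1/4::real) = - 2 * ln 2"
  proof -
    have a: "ln ((2::real) ^ 2) = real 2 * ln 2" by (rule ln_realpow)
    have b: "(2::real) ^ 2 = 4" by simp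
    have "ln (1/4::real) = - ln 4" by (simp add: ln_div)
    then show ?thesis using a unfolding b by simp
  qed
  ultimately have "2 * ln 2 < L * ln 2" using lnd by linarith
  then have L2: "2 < L" using l2 by (rule mult_right_less_imp_less[OF _ less_imp_le])
  define k where "k = nat \<lceil>L\<rceil>"
  have k1: "L \<le> real k" "real k < L + 1" unfolding k_def using L2 by linarith+
  have k3: "3 \<le> k" using k1 L2 by linarith
  define m where "m = k - 2"
  have rm: "real m = real k - 2" unfolding m_def using k3 by simp
  have "ln \<delta> < ln (1 / 2 ^ (m + 1))"
  proof -
    have "ln ((2::real) ^ (m + 1)) = real (m + 1) * ln 2" by (rule ln_realpow)
    then have "ln (1 / 2 ^ (m + 1) :: real) = - real (m + 1) * ln 2" by (simp add: ln_div algebra_simps)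
    moreover have "real (m + 1) < L" using rm k1 by simp
    then have "real (m + 1) * ln 2 < L * ln 2" using l2 by (rule mult_strict_right_mono)
    ultimately show ?thesis using lnd by linarith
  qed
  then have "\<delta> < 1 / 2 ^ (m + 1)" using assms(2) by simp
  then have lo: "3 ^ m \<le> box_count \<delta> E" by (rule N_lower[OF assms(1,2)])
  then have Npos: "0 < box_count \<delta> E" by (metis le_zero_eq not_gr_zero power_not_zero zero_neq_numeral)
  have "ln (real (3 ^ m)) \<le> ln (real (box_count \<delta> E))" using lo Npos by simp
  then have "real m * ln 3 \<le> ln (real (box_count \<delta> E))" by (simp add: ln_realpow)
  moreover have "(- ln \<delta>) * (ln 3 / ln 2) - 2 * ln 3 \<le> real m * ln 3"
  proof -
    have "(- ln \<delta>) * (ln 3 / ln 2) - 2 * ln 3 = (L - 2) * ln 3" unfolding L_def by (simp add: algebra_simps)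
    also have "\<dots> \<le> real m * ln 3" using rm k1 l3 by (intro mult_right_mono) auto
    finally show ?thesis .
  qed
  ultimately have A: "(- ln \<delta>) * (ln 3 / ln 2) - 2 * ln 3 \<le> ln (real (box_count \<delta> E))" by linarith
  have "ln (1 / 2 ^ k) \<le> ln \<delta>"
  proof -
    have "ln (1 / 2 ^ k :: real) = - real k * ln 2" by (simp add: ln_div ln_realpow)
    then show ?thesis using lnd l2 k1 by simp
  qed
  then have "1 / 2 ^ k \<le> \<delta>" using assms(2) by simp
  then have "2 / 2 ^ (k + 1) \<le> \<delta>" by simp
  then have up: "box_count \<delta> E \<le> 3 ^ (k + 1 + 1)" by (rule N_upper[OF assms(1)])
  have up2: "box_count \<delta> E \<le> 3 ^ (k + 2)" using up by (simp add: numeral_2_eq_2)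
  have upr: "real (box_count \<delta> E) \<le> real (3 ^ (k + 2))" by (rule of_nat_mono[OF up2])
  have "ln (real (box_count \<delta> E)) \<le> ln (real (3 ^ (k + 2)))"
    using upr Npos by (subst ln_le_cancel_iff) auto
  moreover have "ln (real ((3::nat) ^ (k + 2))) = real (k + 2) * ln 3"
    by (simp only: of_nat_power of_nat_numeral ln_realpow)
  ultimately have "ln (real (box_count \<delta> E)) \<le> real (k + 2) * ln 3" by simp
  moreover have "real (k + 2) * ln 3 \<le> (- ln \<delta>) * (ln 3 / ln 2) + 3 * ln 3"
  proof -
    have "real (k + 2) * ln 3 \<le> (L + 3) * ln 3" using k1 l3 by (intro mult_right_mono) auto
    also have "\<dots> = (- ln \<delta>) * (ln 3 / ln 2) + 3 * ln 3" unfolding L_def by (simp add: algebra_simps)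
    finally show ?thesis .
  qed
  ultimately have B: "ln (real (box_count \<delta> E)) \<le> (- ln \<delta>) * (ln 3 / ln 2) + 3 * ln 3" by linarith
  show ?thesis using A B by simp
qed

lemma gen_add: "0 < (D::real) \<Longrightarrow> c + b / D = (D * c + b) / D"
  by (simp add: field_simps)

lemma box_dim_good: assumes "good E" shows "has_box_dim E (log 2 3)"
  unfolding has_box_dim_def
proof (rule tendsto_sandwich[where f="\<lambda>\<delta>. ln 3 / ln 2 - 2 * ln 3 / (- ln \<delta>)"
                                and h="\<lambda>\<delta>. ln 3 / ln 2 + 3 * ln 3 / (- ln \<delta>)"])
  have ev: "eventually (\<lambda>\<delta>::real. 0 < \<delta> \<and> \<delta> < 1/4) (at_right 0)"
    unfolding eventually_at_right_field by (intro exI[of _ "1/4"]) auto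
  have mb: "0 < - ln \<delta>" if "0 < \<delta>" "\<delta> < 1/4" for \<delta> :: real
  proof -
    have "ln \<delta> < ln 1" using that by (intro ln_less_cancel_iff[THEN iffD2]) auto
    then show ?thesis by simp
  qed
  show "eventually (\<lambda>\<delta>. ln 3 / ln 2 - 2 * ln 3 / (- ln \<delta>) \<le> ln (real (box_count \<delta> E)) / - ln \<delta>) (at_right 0)"
    using ev
  proof (rule eventually_mono)
    fix \<delta> :: real assume d: "0 < \<delta> \<and> \<delta> < 1/4"
    have D: "0 < - ln \<delta>" using mb d by blast
    have "(- ln \<delta>) * (ln 3 / ln 2) - 2 * ln 3 \<le> ln (real (box_count \<delta> E))" using box_bounds[OF assms] d by blast
    moreover have eq: "ln 3 / ln 2 - 2 * ln 3 / (- ln \<delta>) = ((- ln \<delta>) * (ln 3 / ln 2) - 2 * ln 3) / (- ln \<delta>)"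
      using D by (simp add: diff_divide_distrib)
    ultimately show "ln 3 / ln 2 - 2 * ln 3 / (- ln \<delta>) \<le> ln (real (box_count \<delta> E)) / - ln \<delta>"
      using D by (simp only: eq divide_right_mono less_imp_le)
  qed
  show "eventually (\<lambda>\<delta>. ln (real (box_count \<delta> E)) / - ln \<delta> \<le> ln 3 / ln 2 + 3 * ln 3 / (- ln \<delta>)) (at_right 0)"
    using ev
  proof (rule eventually_mono)
    fix \<delta> :: real assume d: "0 < \<delta> \<and> \<delta> < 1/4"
    have D: "0 < - ln \<delta>" using mb d by blast
    have "ln (real (box_count \<delta> E)) \<le> (- ln \<delta>) * (ln 3 / ln 2) + 3 * ln 3" using box_bounds[OF assms] d by blast
    moreover have eq: "ln 3 / ln 2 + 3 * ln 3 / (- ln \<delta>) = ((- ln \<delta>) * (ln 3 / ln 2) + 3 * ln 3) / (- ln \<delta>)"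
      using gen_add[OF D] .
    ultimately show "ln (real (box_count \<delta> E)) / - ln \<delta> \<le> ln 3 / ln 2 + 3 * ln 3 / (- ln \<delta>)"
      using D by (simp only: eq divide_right_mono less_imp_le)
  qed
  have lnb: "LIM x at_right 0. - ln (x::real) :> at_top"
  proof -
    have "LIM x at_right 0. - (- ln (x::real)) :> at_bot" using ln_at_0 by simp
    then show ?thesis using filterlim_uminus_at_top[of "\<lambda>x. - ln x" "at_right (0::real)"] by blast
  qed
  have z2: "((\<lambda>\<delta>. 2 * ln 3 / (- ln \<delta>)) \<longlongrightarrow> 0) (at_right (0::real))"
    by (rule tendsto_divide_0[OF tendsto_const filterlim_at_top_imp_at_infinity[OF lnb]])
  have z3: "((\<lambda>\<delta>. 3 * ln 3 / (- ln \<delta>)) \<longlongrightarrow> 0) (at_right (0::real))"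
    by (rule tendsto_divide_0[OF tendsto_const filterlim_at_top_imp_at_infinity[OF lnb]])
  have lg: "log 2 3 = ln 3 / ln (2::real)" by (simp add: log_def)
  show "((\<lambda>\<delta>. ln 3 / ln 2 - 2 * ln 3 / (- ln \<delta>)) \<longlongrightarrow> log 2 3) (at_right 0)"
    unfolding lg using tendsto_diff[OF tendsto_const z2] by simp
  show "((\<lambda>\<delta>. ln 3 / ln 2 + 3 * ln 3 / (- ln \<delta>)) \<longlongrightarrow> log 2 3) (at_right 0)"
    unfolding lg using tendsto_add[OF tendsto_const z3] by simp
qed



lemma two_pow_powr: "((2::real) ^ n) powr s = (2 powr s) ^ n"
proof (induction n)
  case 0 then show ?case by simp
next
  case (Suc n)
  have "((2::real) ^ Suc n) powr s = (2 * 2 ^ n) powr s" by simp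
  also have "\<dots> = 2 powr s * (2 ^ n) powr s" by (rule powr_mult)
  finally show ?case using Suc by simp
qed

lemma pre_le_fam: assumes "0 < s" "2 / 2 ^ n \<le> \<delta>"
  shows "hausdorff_pre s \<delta> graphR \<le> ennreal (3 ^ (n + 1) * (2 / 2 ^ n) powr s)"
proof -
  obtain fs where fs: "set fs = Fam n" "distinct fs" using finite_distinct_list[OF Fam_fin] by blast
  define U where "U i = (if i < length fs then fs ! i else {})" for i
  have d0: "0 \<le> \<delta>" using assms(2) by (smt (verit) divide_nonneg_pos zero_less_power)
  have adm: "U \<in> {U :: nat \<Rightarrow> (real \<times> real) set. graphR \<subseteq> (\<Union>i. U i) \<and> (\<forall>i. bounded (U i) \<and> diameter (U i) \<le> \<delta>)}"
  proof (intro CollectI conjI allI)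
    show "graphR \<subseteq> (\<Union>i. U i)"
    proof
      fix p assume "p \<in> graphR"
      then obtain F where F: "F \<in> Fam n" "p \<in> F" using graph_cover[of n] by blast
      then obtain i where "i < length fs" "fs ! i = F" using fs(1) by (metis in_set_conv_nth)
      then show "p \<in> (\<Union>i. U i)" using F unfolding U_def by auto
    qed
  next
    fix i
    show "bounded (U i)"
    proof (cases "i < length fs")
      case True
      then have "fs ! i \<in> Fam n" using fs(1) nth_mem by blast
      then show ?thesis using True Fam_diam unfolding U_def by simp
    next
      case False then show ?thesis unfolding U_def by simp
    qed
    show "diameter (U i) \<le> \<delta>"
    proof (cases "i < length fs")
      case True
      then have "fs ! i \<in> Fam n" using fs(1) nth_mem by blast
      then have "diameter (fs ! i) \<le> 2 / 2 ^ n" using Fam_diam by blast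
      then show ?thesis using True assms(2) unfolding U_def by simp
    next
      case False then show ?thesis using d0 unfolding U_def by simp
    qed
  qed
  define h where "h = (2 / 2 ^ n :: real)"
  have hc: "hcost s (U i) \<le> h powr s" "0 \<le> hcost s (U i)" for i
  proof -
    show "0 \<le> hcost s (U i)" unfolding hcost_def by auto
    show "hcost s (U i) \<le> h powr s"
    proof (cases "i < length fs")
      case True
      then have "fs ! i \<in> Fam n" using fs(1) nth_mem by blast
      then have "diameter (fs ! i) \<le> h" unfolding h_def using Fam_diam by blast
      moreover have "0 \<le> diameter (fs ! i)" by (rule diameter_ge_0) (use Fam_diam \<open>fs ! i \<in> Fam n\<close> in blast)
      ultimately have "diameter (fs ! i) powr s \<le> h powr s" using assms(1) by (intro powr_mono2) auto
      then show ?thesis using True assms(1) unfolding U_def hcost_def by auto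
    next
      case False then show ?thesis unfolding U_def hcost_def by simp
    qed
  qed
  have "hausdorff_pre s \<delta> graphR \<le> (\<Sum>i. ennreal (hcost s (U i)))"
    unfolding hausdorff_pre_def by (rule INF_lower[OF adm])
  also have "(\<Sum>i. ennreal (hcost s (U i))) = (\<Sum>i\<in>{..<length fs}. ennreal (hcost s (U i)))"
    by (rule suminf_finite) (auto simp: U_def hcost_def)
  also have "\<dots> = ennreal (\<Sum>i\<in>{..<length fs}. hcost s (U i))"
    using hc by (intro sum_ennreal) auto
  also have "\<dots> \<le> ennreal (\<Sum>i\<in>{..<length fs}. h powr s)"
    using hc by (intro ennreal_leI sum_mono) auto
  also have "\<dots> = ennreal (real (card (Fam n)) * h powr s)"
    using distinct_card[OF fs(2)] fs(1) by simp
  also have "\<dots> \<le> ennreal (3 ^ (n + 1) * h powr s)"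
  proof (intro ennreal_leI mult_right_mono)
    have "card (Fam n) \<le> 3 ^ (n + 1)" by (rule Fam_card)
    then show "real (card (Fam n)) \<le> 3 ^ (n + 1)" by (metis of_nat_le_iff of_nat_numeral of_nat_power)
  qed simp
  finally show ?thesis unfolding h_def .
qed

lemma gen3: "(3::real) ^ (n + 1) * (P / P ^ n) = 3 * P * (3 ^ n / P ^ n)"
  by (simp add: algebra_simps)

lemma log23_pos: "0 < log 2 (3::real)" by simp

lemma meas_zero: assumes "log 2 3 < s" shows "hausdorff_measure s graphR = 0"
proof -
  have s0: "0 < s" using assms log23_pos by linarith
  have "3 < 2 powr s"
  proof -
    have "2 powr (log 2 3) < 2 powr s" by (rule powr_less_mono[OF assms]) simp
    moreover have "2 powr (log 2 3) = (3::real)" by simp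
    ultimately show ?thesis by simp
  qed
  then have p0: "0 < 2 powr s" by simp
  define q where "q = 3 / 2 powr s"
  have q: "0 \<le> q" "q < 1" unfolding q_def using \<open>3 < 2 powr s\<close> p0 by auto
  have tm: "3 ^ (n + 1) * (2 / 2 ^ n) powr s = 3 * 2 powr s * q ^ n" for n :: nat
  proof -
    have "(2 / 2 ^ n :: real) powr s = 2 powr s / (2 powr s) ^ n"
      by (simp add: powr_divide two_pow_powr)
    moreover have "q ^ n = 3 ^ n / (2 powr s) ^ n" unfolding q_def by (rule power_divide)
    ultimately show ?thesis using gen3[of n "2 powr s"] by simp
  qed
  have zero: "hausdorff_pre s \<delta> graphR = 0" if d: "0 < \<delta>" for \<delta>
  proof -
    have "hausdorff_pre s \<delta> graphR \<le> 0"
    proof (rule ennreal_le_epsilon)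
      fix e :: real assume e: "0 < e"
      have t1: "(\<lambda>n. 3 * 2 powr s * q ^ n) \<longlonglongrightarrow> 3 * 2 powr s * 0"
        by (intro tendsto_mult tendsto_const LIMSEQ_power_zero) (use q in auto)
      have ev1: "eventually (\<lambda>n. 3 * 2 powr s * q ^ n < e) sequentially"
        using order_tendstoD(2)[OF t1] e by simp
      have t2: "(\<lambda>n. 2 * (1/2::real) ^ n) \<longlonglongrightarrow> 2 * 0"
        by (intro tendsto_mult tendsto_const LIMSEQ_power_zero) auto
      have ev2: "eventually (\<lambda>n. 2 * (1/2::real) ^ n < \<delta>) sequentially"
        using order_tendstoD(2)[OF t2] d by simp
      have "eventually (\<lambda>n. 3 * 2 powr s * q ^ n < e \<and> 2 * (1/2::real) ^ n < \<delta>) sequentially"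
        by (rule eventually_conj[OF ev1 ev2])
      then obtain N where N: "\<forall>n\<ge>N. 3 * 2 powr s * q ^ n < e \<and> 2 * (1/2::real) ^ n < \<delta>"
        unfolding eventually_sequentially by blast
      define n where "n = N"
      have n: "3 * 2 powr s * q ^ n < e" "2 * (1/2::real) ^ n < \<delta>" using N unfolding n_def by auto
      have "2 / 2 ^ n \<le> \<delta>" using n(2) by (simp add: power_divide)
      then have "hausdorff_pre s \<delta> graphR \<le> ennreal (3 ^ (n + 1) * (2 / 2 ^ n) powr s)"
        by (rule pre_le_fam[OF s0])
      also have "\<dots> \<le> ennreal e" using n(1) unfolding tm by (intro ennreal_leI) simp
      finally show "hausdorff_pre s \<delta> graphR \<le> 0 + ennreal e" by simp
    qed
    then show ?thesis by simp
  qed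
  show ?thesis unfolding hausdorff_measure_def using zero by simp
qed



lemma hc_ge: assumes "0 \<le> s" "s < 1" "bounded U" "diameter U \<le> 1"
  shows "diameter U \<le> hcost s U"
proof (cases "U = {}")
  case True then show ?thesis unfolding hcost_def by simp
next
  case False
  have d0: "0 \<le> diameter U" by (rule diameter_ge_0[OF assms(3)])
  show ?thesis
  proof (cases "s = 0")
    case True then show ?thesis using False assms(4) unfolding hcost_def by simp
  next
    case s: False
    have "diameter U powr 1 \<le> diameter U powr s"
      by (rule powr_mono') (use assms d0 in auto)
    then show ?thesis using False s d0 unfolding hcost_def by (simp add: powr_one)
  qed
qed

lemma sum_half: assumes adm: "graphR \<subseteq> (\<Union>i. U i)" "\<forall>i. bounded (U i) \<and> diameter (U i) \<le> 1"
  and s: "0 \<le> s" "s < 1"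
  shows "ennreal (1/2) \<le> (\<Sum>i. ennreal (hcost s (U i)))"
proof -
  define d where "d i = diameter (U i)" for i
  define c where "c i = fst (SOME p. p \<in> U i)" for i
  define I where "I i = (if U i = {} then {} else {c i - d i .. c i + d i})" for i
  have d0: "0 \<le> d i" for i unfolding d_def using adm(2) diameter_ge_0 by blast
  have cov: "{0..1::real} \<subseteq> (\<Union>i. I i)"
  proof
    fix x :: real assume x: "x \<in> {0..1}"
    then have "(x, R x) \<in> graphR" unfolding graphR_def by auto
    then obtain i where i: "(x, R x) \<in> U i" using adm(1) by blast
    then have ne: "U i \<noteq> {}" by auto
    define p where "p = (SOME p. p \<in> U i)"
    have p: "p \<in> U i" unfolding p_def using i by (rule someI)
    have "dist (x, R x) p \<le> diameter (U i)" using adm(2) i p by (intro diameter_bounded_bound) auto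
    moreover have "dist x (fst p) \<le> dist (x, R x) p" using dist_fst_le[of "(x, R x)" p] by simp
    ultimately have "\<bar>x - c i\<bar> \<le> d i" unfolding c_def d_def p_def[symmetric] by (simp add: dist_real_def)
    then have "x \<in> I i" unfolding I_def using ne by auto
    then show "x \<in> (\<Union>i. I i)" by blast
  qed
  have Isets: "I i \<in> sets lborel" for i unfolding I_def by auto
  have mI: "emeasure lborel (I i) = ennreal (2 * d i)" for i
  proof (cases "U i = {}")
    case True then show ?thesis unfolding I_def d_def by simp
  next
    case False
    then have "emeasure lborel (I i) = ennreal ((c i + d i) - (c i - d i))"
      unfolding I_def using d0[of i] by (simp add: emeasure_lborel_Icc_eq)
    then show ?thesis by simp
  qed
  have "ennreal 1 = emeasure lborel {0..1::real}" by simp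
  also have "\<dots> \<le> emeasure lborel (\<Union>i. I i)"
    by (rule emeasure_mono[OF cov]) (use Isets in auto)
  also have "\<dots> \<le> (\<Sum>i. emeasure lborel (I i))"
    by (rule emeasure_subadditive_countably) (use Isets in auto)
  also have "\<dots> = (\<Sum>i. 2 * ennreal (d i))"
    unfolding mI using d0 by (simp add: ennreal_mult)
  also have "\<dots> = 2 * (\<Sum>i. ennreal (d i))" by (rule ennreal_suminf_cmult)
  also have "\<dots> \<le> 2 * (\<Sum>i. ennreal (hcost s (U i)))"
  proof (intro mult_left_mono suminf_le summableI ennreal_leI)
    fix i show "d i \<le> hcost s (U i)" unfolding d_def using hc_ge[OF s] adm(2) by blast
  qed simp
  finally have one: "1 \<le> 2 * (\<Sum>i. ennreal (hcost s (U i)))" by simp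
  have "ennreal (1/2) = ennreal (1/2) * 1" by simp
  also have "\<dots> \<le> ennreal (1/2) * (2 * (\<Sum>i. ennreal (hcost s (U i))))"
    by (rule mult_left_mono[OF one]) simp
  also have "\<dots> = (ennreal (1/2) * 2) * (\<Sum>i. ennreal (hcost s (U i)))" by (simp add: mult.assoc)
  also have "ennreal (1/2) * 2 = 1"
  proof -
    have "ennreal (1/2) * ennreal 2 = ennreal (1/2 * 2)" by (rule ennreal_mult[symmetric]) auto
    then show ?thesis by simp
  qed
  finally show ?thesis by simp
qed

lemma meas_pos: assumes "0 \<le> s" "s < 1" shows "hausdorff_measure s graphR \<noteq> 0"
proof -
  have "ennreal (1/2) \<le> hausdorff_pre s 1 graphR"
    unfolding hausdorff_pre_def
  proof (rule INF_greatest)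
    fix U assume "U \<in> {U :: nat \<Rightarrow> (real \<times> real) set. graphR \<subseteq> (\<Union>i. U i) \<and> (\<forall>i. bounded (U i) \<and> diameter (U i) \<le> 1)}"
    then show "ennreal (1/2) \<le> (\<Sum>i. ennreal (hcost s (U i)))" using sum_half assms by blast
  qed
  also have "\<dots> \<le> hausdorff_measure s graphR"
    unfolding hausdorff_measure_def by (rule SUP_upper) simp
  finally have h: "ennreal (1/2) \<le> hausdorff_measure s graphR" .
  show ?thesis
  proof
    assume "hausdorff_measure s graphR = 0"
    then have "ennreal (1/2) \<le> 0" using h by simp
    then show False by simp
  qed
qed

theorem proposition4p5:
  shows "1 \<le> hausdorff_dim graphR \<and> hausdorff_dim graphR \<le> log 2 3 \<and>
         has_box_dim graphR (log 2 3) \<and> has_box_dim (closure graphR) (log 2 3)"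
proof -
  let ?X = "{s. s \<ge> 0 \<and> hausdorff_measure s graphR = 0}"
  have mem: "log 2 3 + e \<in> ?X" if "0 < e" for e
    using meas_zero[of "log 2 3 + e"] that log23_pos by auto
  have m1: "log 2 3 + 1 \<in> ?X" by (rule mem) simp
  have ne: "?X \<noteq> {}"
  proof
    assume "?X = {}"
    then show False using m1 by simp
  qed
  have bdd: "bdd_below ?X" by (rule bdd_belowI[of _ 0]) auto
  have A: "1 \<le> hausdorff_dim graphR"
    unfolding hausdorff_dim_def
  proof (rule cInf_greatest[OF ne])
    fix s assume "s \<in> ?X"
    then have s0: "0 \<le> s" "hausdorff_measure s graphR = 0" by auto
    show "1 \<le> s"
    proof (rule ccontr)
      assume "\<not> 1 \<le> s"
      then have "s < 1" by simp
      then show False using meas_pos[OF s0(1)] s0(2) by blast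
    qed
  qed
  have B: "hausdorff_dim graphR \<le> log 2 3"
    unfolding hausdorff_dim_def
  proof (rule field_le_epsilon)
    fix e :: real assume "0 < e"
    then show "Inf ?X \<le> log 2 3 + e" by (rule cInf_lower[OF mem bdd])
  qed
  have C: "has_box_dim graphR (log 2 3)" by (rule box_dim_good) (simp add: good_def)
  have D: "has_box_dim (closure graphR) (log 2 3)" by (rule box_dim_good) (simp add: good_def)
  show ?thesis using A B C D by blast
qed


end
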